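(* If $B^{(0)}(X,Y),\dots,B^{(\ell)}(X,Y)\in\mathbb F_q[X,Y]$ is a basis of the $\mathbb F_q[X]$-module $M_{s,\ell}$, then $B^{(0)},\dots,B^{(\ell)},\,Y^{\ell-s+1}(Y-R(X))^s$ is a basis of $M_{s,\ell+1}$.
   Context: Let $\mathbb F_q$ be a finite field and $n<q$. Let $\alpha_0,\dots,\alpha_{n-1}$ be distinct nonzero elements of $\mathbb F_q$, $w_0,\dots,w_{n-1}$ nonzero elements of $\mathbb F_q$, $r\in\mathbb F_q^n$, $r_i'=r_i/w_i$, and $R(X)$ the unique polynomial of degree less than $n$ with $R(\alpha_i)=r_i'$. For positive integers $s\le\ell$, $M_{s,\ell}$ is the $\mathbb F_q[X]$-module of all $Q\in\mathbb F_q[X,Y]$ of $Y$-degree at most $\ell$ such that for every $i$, $Q(X+\alpha_i,Y+r_i')$ has no monomials of total degree less than $s$. *)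

theory Defs
  imports "HOL-Computational_Algebra.Polynomial"
begin

text \<open>Bivariate polynomials F[X,Y] are represented as 'a poly poly: an outer polynomial
  in Y whose coefficients are polynomials in X. The Y-degree is the outer degree;
  the coefficient of X^i Y^j in Q is coeff (coeff Q j) i.\<close>

definition shiftXY :: "'a::comm_ring_1 poly poly \<Rightarrow> 'a \<Rightarrow> 'a \<Rightarrow> 'a poly poly" where
  "shiftXY Q a b = map_poly (\<lambda>p. pcompose p [:a, 1:]) (pcompose Q [:[:b:], 1:])"
  \<comment> \<open>Q(X + a, Y + b)\<close>

definition no_low_monomials :: "'a::comm_ring_1 poly poly \<Rightarrow> nat \<Rightarrow> bool" where
  "no_low_monomials Q s \<longleftrightarrow> (\<forall>i j. i + j < s \<longrightarrow> coeff (coeff Q j) i = 0)"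

definition Mmod :: "nat \<Rightarrow> (nat \<Rightarrow> 'a::comm_ring_1) \<Rightarrow> (nat \<Rightarrow> 'a) \<Rightarrow> nat \<Rightarrow> nat \<Rightarrow> 'a poly poly set" where
  "Mmod n alpha rr s l = {Q. degree Q \<le> l \<and>
      (\<forall>i<n. no_low_monomials (shiftXY Q (alpha i) (rr i)) s)}"

definition is_module_basis :: "'a::comm_ring_1 poly poly set \<Rightarrow> (nat \<Rightarrow> 'a poly poly) \<Rightarrow> nat \<Rightarrow> bool" where
  "is_module_basis M b m \<longleftrightarrow>
     (\<forall>k<m. b k \<in> M) \<and>
     (\<forall>Q\<in>M. \<exists>c :: nat \<Rightarrow> 'a poly. Q = (\<Sum>k<m. smult (c k) (b k))) \<and>
     (\<forall>c :: nat \<Rightarrow> 'a poly. (\<Sum>k<m. smult (c k) (b k)) = 0 \<longrightarrow> (\<forall>k<m. c k = 0))"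

end

theory Submission
  imports Defs
begin

lemma hom_sum:
  assumes "f 0 = 0" "\<And>x y. f (x + y) = f x + f y"
  shows "f (sum g A) = (\<Sum>x\<in>A. f (g x))"
proof (induction A rule: infinite_finite_induct)
  case (insert x F) then show ?case using assms by simp
qed (use assms in auto)

lemma map_poly_add_hom:
  fixes f :: "'a::comm_semiring_0 \<Rightarrow> 'b::comm_semiring_0"
  assumes "f 0 = 0" "\<And>x y. f (x + y) = f x + f y"
  shows "map_poly f (p + q) = map_poly f p + map_poly f q"
  by (rule poly_eqI) (simp add: coeff_map_poly assms)

lemma map_poly_mult_hom:
  fixes f :: "'a::comm_semiring_0 \<Rightarrow> 'b::comm_semiring_0"
  assumes "f 0 = 0" "\<And>x y. f (x + y) = f x + f y" "\<And>x y. f (x * y) = f x * f y"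
  shows "map_poly f (p * q) = map_poly f p * map_poly f q"
  by (rule poly_eqI) (simp add: coeff_map_poly assms coeff_mult hom_sum[where f=f, OF assms(1,2)])

lemma shiftXY_add: "shiftXY (P + Q) a b = shiftXY P a b + shiftXY Q a b"
  unfolding shiftXY_def by (simp add: pcompose_add map_poly_add_hom)

lemma shiftXY_mult: "shiftXY (P * Q) a b = shiftXY P a b * shiftXY Q a b"
  for P Q :: "'a::comm_ring_1 poly poly"
  unfolding shiftXY_def by (simp add: pcompose_mult pcompose_add map_poly_mult_hom)

lemma shiftXY_1: "shiftXY (1 :: 'a::comm_ring_1 poly poly) a b = 1"
  unfolding shiftXY_def by (simp add: pcompose_1)

lemma shiftXY_power: "shiftXY (P ^ k) a b = shiftXY P a b ^ k"
  for P :: "'a::comm_ring_1 poly poly"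
  by (induction k) (simp_all add: shiftXY_1 shiftXY_mult)

lemma nlm_add: "no_low_monomials A s \<Longrightarrow> no_low_monomials B s \<Longrightarrow> no_low_monomials (A + B) s"
  unfolding no_low_monomials_def by simp

lemma nlm_0: "no_low_monomials A 0"
  unfolding no_low_monomials_def by simp

lemma nlm_mult:
  fixes A B :: "'a::comm_ring_1 poly poly"
  assumes a: "no_low_monomials A s" and b: "no_low_monomials B t"
  shows "no_low_monomials (A * B) (s + t)"
  unfolding no_low_monomials_def
proof (intro allI impI)
  fix i j assume ij: "i + j < s + t"
  have "coeff (coeff (A * B) j) i = (\<Sum>j1\<le>j. \<Sum>i1\<le>i. coeff (coeff A j1) i1 * coeff (coeff B (j - j1)) (i - i1))"
    by (simp add: coeff_mult coeff_sum)
  also have "\<dots> = 0"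
  proof (intro sum.neutral ballI)
    fix j1 i1 assume "j1 \<in> {..j}" "i1 \<in> {..i}"
    then have "i1 + j1 < s \<or> (i - i1) + (j - j1) < t" using ij by auto
    then show "coeff (coeff A j1) i1 * coeff (coeff B (j - j1)) (i - i1) = 0"
      using a b unfolding no_low_monomials_def by auto
  qed
  finally show "coeff (coeff (A * B) j) i = 0" .
qed

lemma nlm_power:
  fixes A :: "'a::comm_ring_1 poly poly"
  assumes "no_low_monomials A 1"
  shows "no_low_monomials (A ^ k) k"
proof (induction k)
  case 0 show ?case by (rule nlm_0)
next
  case (Suc k) show ?case using nlm_mult[OF assms Suc] by simp
qed

lemma nlm_lin:
  fixes R :: "'a::comm_ring_1 poly"
  assumes "poly R a = b"
  shows "no_low_monomials (shiftXY [:-R, 1:] a b) 1"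
  using assms unfolding no_low_monomials_def shiftXY_def
  by (simp add: pcompose_pCons coeff_map_poly)

theorem lemma7:
  fixes alpha w r :: "nat \<Rightarrow> 'a::{finite,field}"
    and n s l :: nat
    and R :: "'a poly"
    and B :: "nat \<Rightarrow> 'a poly poly"
  assumes "n < card (UNIV :: 'a set)"
    and "inj_on alpha {..<n}"
    and "\<And>i. i < n \<Longrightarrow> alpha i \<noteq> 0"
    and "\<And>i. i < n \<Longrightarrow> w i \<noteq> 0"
    and "R = 0 \<or> degree R < n"
    and "\<And>i. i < n \<Longrightarrow> poly R (alpha i) = r i / w i"
    and "0 < s" and "s \<le> l"
    and "is_module_basis (Mmod n alpha (\<lambda>i. r i / w i) s l) B (l + 1)"
  shows "is_module_basis (Mmod n alpha (\<lambda>i. r i / w i) s (l + 1))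
           (B(l + 1 := monom 1 (l - s + 1) * [:- R, 1:] ^ s)) (l + 2)"
proof -
  define rr where "rr = (\<lambda>i. r i / w i)"
  define P :: "'a poly poly" where "P = monom 1 (l - s + 1) * [:- R, 1:] ^ s"
  define B' where "B' = B(l + 1 := P)"
  have Rr: "\<And>i. i < n \<Longrightarrow> poly R (alpha i) = rr i" using assms(6) by (simp add: rr_def)
  have B: "is_module_basis (Mmod n alpha rr s l) B (l + 1)" using assms(9) by (simp add: rr_def)
  have degP: "degree P = l + 1" and lcP: "coeff P (l + 1) = 1"
  proof -
    have "degree ([:- R, 1:] ^ s) = s" by (simp add: degree_power_eq)
    moreover have "lead_coeff ([:- R, 1:] ^ s) = 1" by (simp add: lead_coeff_power)
    ultimately show "degree P = l + 1" "coeff P (l + 1) = 1"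
      using assms(8) unfolding P_def
      by (simp_all add: degree_mult_eq degree_monom_eq coeff_monom_mult Suc_diff_le)
  qed
  have nlmP: "no_low_monomials (shiftXY P (alpha i) (rr i)) s" if "i < n" for i
  proof -
    have "no_low_monomials (shiftXY [:- R, 1:] (alpha i) (rr i) ^ s) s"
      by (rule nlm_power, rule nlm_lin, rule Rr[OF that])
    then have "no_low_monomials (shiftXY (monom 1 (l - s + 1)) (alpha i) (rr i) * shiftXY [:- R, 1:] (alpha i) (rr i) ^ s) (0 + s)"
      by (intro nlm_mult nlm_0)
    then show ?thesis unfolding P_def by (simp add: shiftXY_mult shiftXY_power)
  qed
  have Pin: "P \<in> Mmod n alpha rr s (l + 1)"
    unfolding Mmod_def using degP nlmP by simp
  have sub: "Mmod n alpha rr s l \<subseteq> Mmod n alpha rr s (l + 1)"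
    unfolding Mmod_def by auto
  have sumsplit: "(\<Sum>k<l + 2. smult (c k) (B' k)) = (\<Sum>k<l + 1. smult (c k) (B k)) + smult (c (l + 1)) P" for c
  proof -
    have "(\<Sum>k<l + 2. smult (c k) (B' k)) = (\<Sum>k<l + 1. smult (c k) (B' k)) + smult (c (l + 1)) (B' (l+1))"
      by (simp add: numeral_2_eq_2)
    moreover have "(\<Sum>k<l + 1. smult (c k) (B' k)) = (\<Sum>k<l + 1. smult (c k) (B k))"
      by (rule sum.cong) (auto simp: B'_def)
    ultimately show ?thesis by (simp add: B'_def)
  qed
  have mem: "\<forall>k<l + 2. B' k \<in> Mmod n alpha rr s (l + 1)"
  proof (intro allI impI)
    fix k assume "k < l + 2"
    then consider "k < l + 1" | "k = l + 1" by linarith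
    then show "B' k \<in> Mmod n alpha rr s (l + 1)"
    proof cases
      case 1 then show ?thesis using B sub unfolding is_module_basis_def B'_def by auto
    next
      case 2 then show ?thesis using Pin by (simp add: B'_def)
    qed
  qed
  have span: "\<forall>Q\<in>Mmod n alpha rr s (l + 1). \<exists>c. Q = (\<Sum>k<l + 2. smult (c k) (B' k))"
  proof
    fix Q assume Q: "Q \<in> Mmod n alpha rr s (l + 1)"
    define a where "a = coeff Q (l + 1)"
    define Q' where "Q' = Q + smult (- a) P"
    have "degree Q' \<le> l"
    proof (rule degree_le, intro allI impI)
      fix j assume "l < j"
      then consider "j = l + 1" | "j > l + 1" by linarith
      then show "coeff Q' j = 0"
      proof cases
        case 1 then show ?thesis using lcP by (simp add: Q'_def a_def)
      next
        case 2
        then have "coeff Q j = 0" "coeff P j = 0" using Q degP unfolding Mmod_def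
          by (auto intro: coeff_eq_0)
        then show ?thesis by (simp add: Q'_def)
      qed
    qed
    moreover have "no_low_monomials (shiftXY Q' (alpha i) (rr i)) s" if "i < n" for i
    proof -
      have "no_low_monomials (shiftXY [:- a:] (alpha i) (rr i) * shiftXY P (alpha i) (rr i)) (0 + s)"
        by (intro nlm_mult nlm_0 nlmP that)
      moreover have "shiftXY Q' (alpha i) (rr i) = shiftXY Q (alpha i) (rr i) + shiftXY [:- a:] (alpha i) (rr i) * shiftXY P (alpha i) (rr i)"
      proof -
        have "Q' = Q + [:- a:] * P" unfolding Q'_def by simp
        then show ?thesis by (simp only: shiftXY_add shiftXY_mult)
      qed
      moreover have "no_low_monomials (shiftXY Q (alpha i) (rr i)) s" using Q that unfolding Mmod_def by simp
      ultimately show ?thesis by (simp add: nlm_add)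
    qed
    ultimately have "Q' \<in> Mmod n alpha rr s l" unfolding Mmod_def by simp
    then obtain d where d: "Q' = (\<Sum>k<l + 1. smult (d k) (B k))"
      using B unfolding is_module_basis_def by blast
    have "Q = (\<Sum>k<l + 2. smult ((d(l + 1 := a)) k) (B' k))"
    proof -
      have "(\<Sum>k<l + 1. smult ((d(l + 1 := a)) k) (B k)) = (\<Sum>k<l + 1. smult (d k) (B k))"
        by (rule sum.cong) auto
      then show ?thesis unfolding sumsplit using d by (simp add: Q'_def algebra_simps)
    qed
    then show "\<exists>c. Q = (\<Sum>k<l + 2. smult (c k) (B' k))" by blast
  qed
  have indep: "\<forall>c. (\<Sum>k<l + 2. smult (c k) (B' k)) = 0 \<longrightarrow> (\<forall>k<l + 2. c k = 0)"
  proof (intro allI impI)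
    fix c k assume eq: "(\<Sum>k<l + 2. smult (c k) (B' k)) = 0" and k: "k < l + 2"
    define S where "S = (\<Sum>k<l + 1. smult (c k) (B k))"
    have "degree S \<le> l" unfolding S_def
    proof (rule degree_sum_le)
      fix k assume "k \<in> {..<l + 1}"
      then have "degree (B k) \<le> l" using B unfolding is_module_basis_def Mmod_def by auto
      then show "degree (smult (c k) (B k)) \<le> l" using degree_smult_le order_trans by blast
    qed simp
    then have "coeff S (l + 1) = 0" by (intro coeff_eq_0) simp
    moreover have "S + smult (c (l + 1)) P = 0" using eq sumsplit S_def by simp
    then have "coeff (S + smult (c (l + 1)) P) (l + 1) = 0" by simp
    ultimately have c1: "c (l + 1) = 0" using lcP by simp
    then have "S = 0" using \<open>S + smult (c (l + 1)) P = 0\<close> by simp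
    then have "\<forall>k<l + 1. c k = 0" using B unfolding is_module_basis_def S_def by blast
    then show "c k = 0" using c1 k by (cases "k = l + 1") auto
  qed
  show ?thesis
    using mem span indep unfolding is_module_basis_def B'_def P_def rr_def by simp
qed

end
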